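(* (i) Every instance of the Balancing with Friendship game with $m$ machines is $\left(2-\frac1m,0\right)$-semi-smooth. Consequently its price of total anarchy is at most $2-\frac1m$. (ii) The bound is tight. For every $m\ge1$, take $n=m^2$ and let $G$ consist of $m$ vertex-disjoint cliques of size $m$. Let $\vec s$ be the state in which the $m$ members of each clique are placed on $m$ distinct machines, so that each machine receives exactly one member of each clique. Then $\vec s$ is a pure Nash equilibrium with $c(\vec s)=\left(2-\frac1m\right)c(\vec s^* )$.
   Context: An instance of the Balancing with Friendship (BwF) game consists of: - players $N=\{1,\dots,n\}$; - machines $M=\{1,\dots,m\}$; - a simple undirected graph $G=(N,E)$ (the friendship graph). A state is $\vec s\in M^n$. Let $X_k(\vec s)=\{i:s_i=k\}$ and $x_k(\vec s)=|X_k(\vec s)|$. The cost of player $i$ with $s_i=k$ is $x_k(\vec s)$ plus the number of neighbours of $i$ in $G$ not on machine $k$. The social cost is $c(\vec s)=\sum_ic_i(\vec s)$, and $\vec s^*$ minimizes $c$. A cost-minimization game is $(\lambda,\mu)$-semi-smooth if there exist probability distributions $\sigma_i$ over each player's strategies such that for every state $\vec s$, $$\sum_i\mathbf E_{s_i'\sim\sigma_i}[c_i(s_i',\vec s_{-i})]\le\lambda c(\vec s^* )+\mu c(\vec s).$$ A coarse correlated equilibrium (CCE) is a distribution $\sigma$ over states such that for every player $i$ and machine $s_i'$, $$\mathbf E_{\vec s\sim\sigma}[c_i(\vec s)]\le\mathbf E_{\vec s\sim\sigma}[c_i(s_i',\vec s_{-i})].$$ The price of total anarchy is $\sup_\sigma\mathbf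 E_{\vec s\sim\sigma}[c(\vec s)]/c(\vec s^* )$ over all CCE $\sigma$. *)

theory Defs
  imports "HOL-Probability.Probability"
begin

text \<open>Players are 0,...,n-1, machines are 0,...,m-1.
  The friendship graph is given by an edge relation E on the players.\<close>

definition bwf_states :: "nat \<Rightarrow> nat \<Rightarrow> (nat \<Rightarrow> nat) set" where
  "bwf_states n m = PiE {..<n} (\<lambda>_. {..<m})"

definition simple_graph_on :: "nat \<Rightarrow> (nat \<Rightarrow> nat \<Rightarrow> bool) \<Rightarrow> bool" where
  "simple_graph_on n E \<longleftrightarrow> (\<forall>i<n. \<forall>j<n. E i j \<longrightarrow> E j i) \<and> (\<forall>i<n. \<not> E i i)"

definition bwf_load :: "nat \<Rightarrow> (nat \<Rightarrow> nat) \<Rightarrow> nat \<Rightarrow> nat" where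
  "bwf_load n s k = card {j \<in> {..<n}. s j = k}"

definition bwf_cost :: "nat \<Rightarrow> (nat \<Rightarrow> nat \<Rightarrow> bool) \<Rightarrow> (nat \<Rightarrow> nat) \<Rightarrow> nat \<Rightarrow> nat" where
  "bwf_cost n E s i = bwf_load n s (s i) + card {j \<in> {..<n}. E i j \<and> s j \<noteq> s i}"

definition bwf_social_cost :: "nat \<Rightarrow> (nat \<Rightarrow> nat \<Rightarrow> bool) \<Rightarrow> (nat \<Rightarrow> nat) \<Rightarrow> nat" where
  "bwf_social_cost n E s = (\<Sum>i<n. bwf_cost n E s i)"

definition bwf_opt :: "nat \<Rightarrow> nat \<Rightarrow> (nat \<Rightarrow> nat \<Rightarrow> bool) \<Rightarrow> nat" where
  "bwf_opt n m E = Min (bwf_social_cost n E ` bwf_states n m)"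

definition bwf_semi_smooth ::
  "nat \<Rightarrow> nat \<Rightarrow> (nat \<Rightarrow> nat \<Rightarrow> bool) \<Rightarrow> real \<Rightarrow> real \<Rightarrow> bool" where
  "bwf_semi_smooth n m E lam mu \<longleftrightarrow>
     (\<exists>\<sigma> :: nat \<Rightarrow> nat pmf. (\<forall>i<n. set_pmf (\<sigma> i) \<subseteq> {..<m}) \<and>
        (\<forall>s \<in> bwf_states n m.
           (\<Sum>i<n. measure_pmf.expectation (\<sigma> i) (\<lambda>k. real (bwf_cost n E (s(i := k)) i)))
             \<le> lam * real (bwf_opt n m E) + mu * real (bwf_social_cost n E s)))"

definition bwf_CCE :: "nat \<Rightarrow> nat \<Rightarrow> (nat \<Rightarrow> nat \<Rightarrow> bool) \<Rightarrow> (nat \<Rightarrow> nat) pmf \<Rightarrow> bool" where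
  "bwf_CCE n m E \<sigma> \<longleftrightarrow> set_pmf \<sigma> \<subseteq> bwf_states n m \<and>
     (\<forall>i<n. \<forall>k<m.
        measure_pmf.expectation \<sigma> (\<lambda>s. real (bwf_cost n E s i))
          \<le> measure_pmf.expectation \<sigma> (\<lambda>s. real (bwf_cost n E (s(i := k)) i)))"

definition bwf_pure_NE :: "nat \<Rightarrow> nat \<Rightarrow> (nat \<Rightarrow> nat \<Rightarrow> bool) \<Rightarrow> (nat \<Rightarrow> nat) \<Rightarrow> bool" where
  "bwf_pure_NE n m E s \<longleftrightarrow> s \<in> bwf_states n m \<and>
     (\<forall>i<n. \<forall>k<m. bwf_cost n E s i \<le> bwf_cost n E (s(i := k)) i)"

text \<open>m vertex-disjoint cliques of size m on players 0..m^2-1: clique c = {c*m,...,c*m+m-1}\<close>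
definition clique_graph :: "nat \<Rightarrow> nat \<Rightarrow> nat \<Rightarrow> bool" where
  "clique_graph m i j \<longleftrightarrow> i < m^2 \<and> j < m^2 \<and> i \<noteq> j \<and> i div m = j div m"

end

theory Submission imports Defs begin

lemma card_sum: fixes n :: nat shows "card {j \<in> {..<n}. P j} = (\<Sum>j<n. (of_bool (P j)::nat))"
proof -
  have "card {j \<in> {..<n}. P j} = (\<Sum>x\<in>{j \<in> {..<n}. P j}. (1::nat))" by (rule card_eq_sum)
  also have "\<dots> = (\<Sum>j<n. if P j then 1 else 0)" by (rule sum.inter_filter) simp
  also have "\<dots> = (\<Sum>j<n. (of_bool (P j)::nat))" by (simp only: of_bool_def)
  finally show ?thesis .
qed

lemma cs:
  fixes x :: "nat \<Rightarrow> real"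
  assumes "m > 0" "(\<Sum>k<m. x k) = n"
  shows "n^2 \<le> m * (\<Sum>k<m. (x k)^2)"
proof -
  have "0 \<le> (\<Sum>k<m. (m * x k - n)^2)" by (simp add: sum_nonneg)
  also have "\<dots> = m^2 * (\<Sum>k<m. (x k)^2) - 2*m*n*(\<Sum>k<m. x k) + m * n^2"
    by (simp add: power2_diff sum.distrib sum_subtractf sum_distrib_left power_mult_distrib algebra_simps)
  also have "\<dots> = m * (m * (\<Sum>k<m. (x k)^2) - n^2)" using assms(2) by (simp add: power2_eq_square algebra_simps)
  finally show ?thesis using assms(1) by (simp add: zero_le_mult_iff)
qed

definition AA :: "nat \<Rightarrow> (nat \<Rightarrow> nat) \<Rightarrow> nat" where
  "AA n s = (\<Sum>i<n. \<Sum>j<n. (of_bool (s j = s i)::nat))"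
definition BB :: "nat \<Rightarrow> (nat \<Rightarrow> nat \<Rightarrow> bool) \<Rightarrow> (nat \<Rightarrow> nat) \<Rightarrow> nat" where
  "BB n E s = (\<Sum>i<n. \<Sum>j<n. (of_bool (E i j \<and> s j \<noteq> s i)::nat))"
definition DD :: "nat \<Rightarrow> (nat \<Rightarrow> nat \<Rightarrow> bool) \<Rightarrow> nat" where
  "DD n E = (\<Sum>i<n. \<Sum>j<n. (of_bool (E i j)::nat))"

lemma social_AB: "bwf_social_cost n E s = AA n s + BB n E s"
  unfolding bwf_social_cost_def bwf_cost_def bwf_load_def AA_def BB_def
  by (simp only: card_sum sum.distrib)

lemma D_le: assumes "simple_graph_on n E" shows "DD n E + n \<le> AA n s + BB n E s"
proof -
  have pt: "(of_bool (E i j)::nat) + of_bool (j = i) \<le> of_bool (s j = s i) + of_bool (E i j \<and> s j \<noteq> s i)"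
    if "i < n" "j < n" for i j
  proof -
    have "j = i \<Longrightarrow> \<not> E i j" using assms that unfolding simple_graph_on_def by blast
    then show ?thesis by (cases "j = i"; cases "E i j"; cases "s j = s i") simp_all
  qed
  have d1: "(\<Sum>j<n. (of_bool (j = i)::nat)) = 1" if "i < n" for i
    using that by (simp add: of_bool_def sum.delta)
  have "DD n E + n = (\<Sum>i<n. (\<Sum>j<n. (of_bool (E i j)::nat)) + 1)"
    unfolding DD_def by (simp only: sum.distrib card_lessThan sum_constant mult_1_right of_nat_id)
  also have "\<dots> = (\<Sum>i<n. (\<Sum>j<n. (of_bool (E i j)::nat)) + (\<Sum>j<n. of_bool (j = i)))"
    by (rule sum.cong[OF refl]) (simp only: lessThan_iff d1)
  also have "\<dots> = (\<Sum>i<n. \<Sum>j<n. (of_bool (E i j)::nat) + of_bool (j = i))"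
    by (simp only: sum.distrib)
  also have "\<dots> \<le> (\<Sum>i<n. \<Sum>j<n. (of_bool (s j = s i)::nat) + of_bool (E i j \<and> s j \<noteq> s i))"
    by (intro sum_mono) (simp only: lessThan_iff pt)
  also have "\<dots> = AA n s + BB n E s" unfolding AA_def BB_def by (simp only: sum.distrib)
  finally show ?thesis .
qed

lemma A_lower: assumes "s \<in> bwf_states n m" "m > 0" shows "n^2 \<le> m * AA n s"
proof -
  define x where "x k = (\<Sum>j<n. (of_bool (s j = k)::nat))" for k
  have sm: "s j < m" if "j < n" for j using assms(1) that unfolding bwf_states_def PiE_iff by blast
  have one: "(\<Sum>k<m. (of_bool (s j = k)::nat)) = 1" if "j < n" for j
  proof -
    have "(\<Sum>k<m. (of_bool (s j = k)::nat)) = (\<Sum>k\<in>{s j}. 1)"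
      by (rule sum.mono_neutral_cong_right) (use sm[OF that] in auto)
    then show ?thesis by simp
  qed
  have "(\<Sum>k<m. x k) = (\<Sum>j<n. \<Sum>k<m. (of_bool (s j = k)::nat))" unfolding x_def by (rule sum.swap)
  also have "\<dots> = (\<Sum>j<n. 1)" by (rule sum.cong[OF refl]) (metis lessThan_iff one)
  finally have xs: "(\<Sum>k<m. x k) = n" by simp
  have pw: "(of_bool (s j = s i)::nat) = (\<Sum>k<m. of_bool (s i = k) * of_bool (s j = k))" if ij: "i < n" "j < n" for i j
  proof -
    have st: "{..<m} \<inter> {k. s i = k \<and> s j = k} = (if s j = s i then {s i} else {})" using sm ij by auto
    have "(\<Sum>k<m. (of_bool (s i = k)::nat) * of_bool (s j = k)) = (\<Sum>k<m. of_bool (s i = k \<and> s j = k))"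
      by (simp only: of_bool_conj)
    also have "\<dots> = card ({..<m} \<inter> {k. s i = k \<and> s j = k})" by (simp only: sum_of_bool_eq finite_lessThan of_nat_id)
    also have "\<dots> = of_bool (s j = s i)" unfolding st by simp
    finally show "(of_bool (s j = s i)::nat) = (\<Sum>k<m. of_bool (s i = k) * of_bool (s j = k))" by (rule sym)
  qed
  have "AA n s = (\<Sum>i<n. \<Sum>j<n. \<Sum>k<m. (of_bool (s i = k)::nat) * of_bool (s j = k))"
    unfolding AA_def by (rule sum.cong[OF refl], rule sum.cong[OF refl]) (metis lessThan_iff pw)
  also have "\<dots> = (\<Sum>i<n. \<Sum>k<m. \<Sum>j<n. (of_bool (s i = k)::nat) * of_bool (s j = k))"
    by (rule sum.cong[OF refl]) (rule sum.swap)
  also have "\<dots> = (\<Sum>k<m. \<Sum>i<n. \<Sum>j<n. (of_bool (s i = k)::nat) * of_bool (s j = k))"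
    by (rule sum.swap)
  also have "\<dots> = (\<Sum>k<m. x k * x k)"
    unfolding x_def by (simp only: sum_product)
  finally have A0: "AA n s = (\<Sum>k<m. x k * x k)" .
  have A: "AA n s = (\<Sum>k<m. (x k)^2)" unfolding A0 by (simp only: power2_eq_square)
  have xs': "(\<Sum>k<m. real (x k)) = real n" using xs by (simp flip: of_nat_sum)
  have "real n^2 \<le> real m * (\<Sum>k<m. (real (x k))^2)"
    by (rule cs) (use assms(2) xs' in auto)
  then have "real (n^2) \<le> real (m * AA n s)" unfolding A by simp
  then show ?thesis by linarith
qed

lemma dev_sum:
  assumes sg: "simple_graph_on n E" and s: "s \<in> bwf_states n m" and i: "i < n" and m: "m > 0"
  shows "(\<Sum>k<m. bwf_cost n E (s(i:=k)) i) = n + (m-1) + (m-1) * (\<Sum>j<n. (of_bool (E i j)::nat))"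
proof -
  have sm: "s j < m" if "j < n" for j using s that unfolding bwf_states_def by auto
  have Eii: "\<not> E i i" using sg i unfolding simple_graph_on_def by auto
  define g where "g j k = (if j = i then 1 else (of_bool (s j = k)::nat) + of_bool (E i j \<and> s j \<noteq> k))" for j k
  have c: "bwf_cost n E (s(i:=k)) i = (\<Sum>j<n. g j k)" for k
  proof -
    have "bwf_cost n E (s(i:=k)) i = (\<Sum>j<n. (of_bool ((s(i:=k)) j = k)::nat)) + (\<Sum>j<n. of_bool (E i j \<and> (s(i:=k)) j \<noteq> k))"
      unfolding bwf_cost_def bwf_load_def by (simp only: card_sum fun_upd_same)
    also have "\<dots> = (\<Sum>j<n. g j k)" unfolding sum.distrib[symmetric]
      by (rule sum.cong[OF refl]) (auto simp: g_def Eii)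
    finally show ?thesis .
  qed
  have gk: "(\<Sum>k<m. g j k) = 1 + of_bool (E i j) * (m-1) + (if j = i then m - 1 else 0)" if "j < n" for j
  proof (cases "j = i")
    case True then show ?thesis using m Eii by (simp add: g_def)
  next
    case False
    have a: "(\<Sum>k<m. (of_bool (s j = k)::nat)) = 1"
    proof -
      have "(\<Sum>k<m. (of_bool (s j = k)::nat)) = (\<Sum>k\<in>{s j}. 1)"
        by (rule sum.mono_neutral_cong_right) (use sm[OF that] in auto)
      then show ?thesis by simp
    qed
    have b: "(\<Sum>k<m. (of_bool (E i j \<and> s j \<noteq> k)::nat)) = of_bool (E i j) * (m-1)"
    proof -
      have "{..<m} \<inter> {k. E i j \<and> s j \<noteq> k} = (if E i j then {..<m} - {s j} else {})" using sm[OF that] by auto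
      then show ?thesis using sm[OF that] by (simp only: sum_of_bool_eq finite_lessThan) simp
    qed
    show ?thesis using False a b by (simp add: g_def sum.distrib)
  qed
  have "(\<Sum>k<m. bwf_cost n E (s(i:=k)) i) = (\<Sum>j<n. \<Sum>k<m. g j k)" unfolding c by (rule sum.swap)
  also have "\<dots> = (\<Sum>j<n. 1 + of_bool (E i j) * (m-1) + (if j = i then m - 1 else 0))"
    by (rule sum.cong[OF refl]) (simp add: gk)
  also have "\<dots> = (\<Sum>j<n. 1) + (\<Sum>j<n. of_bool (E i j) * (m-1)) + (\<Sum>j<n. if j = i then m - 1 else 0)"
    by (simp only: sum.distrib)
  also have "(\<Sum>j<n. if j = i then m - 1 else 0) = m - 1" using i by (simp add: sum.delta)
  also have "(\<Sum>j<n. (of_bool (E i j)::nat) * (m-1)) = (m-1) * (\<Sum>j<n. (of_bool (E i j)::nat))"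
    unfolding sum_distrib_left by (rule sum.cong[OF refl]) (rule mult.commute)
  also have "(\<Sum>j<n. (1::nat)) = n" by simp
  finally have "(\<Sum>k<m. bwf_cost n E (s(i:=k)) i) = n + (m-1) * (\<Sum>j<n. (of_bool (E i j)::nat)) + (m-1)" .
  then show ?thesis by linarith
qed

definition GG :: "nat \<Rightarrow> nat \<Rightarrow> (nat \<Rightarrow> nat \<Rightarrow> bool) \<Rightarrow> (nat \<Rightarrow> nat) \<Rightarrow> nat" where
  "GG n m E s = (\<Sum>i<n. \<Sum>k<m. bwf_cost n E (s(i:=k)) i)"

lemma GG_eq:
  assumes sg: "simple_graph_on n E" and s: "s \<in> bwf_states n m" and m: "m > 0"
  shows "GG n m E s = n * n + (m-1) * (n + DD n E)"
proof -
  have "GG n m E s = (\<Sum>i<n. n + (m-1) + (m-1) * (\<Sum>j<n. (of_bool (E i j)::nat)))"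
    unfolding GG_def by (rule sum.cong[OF refl]) (use dev_sum[OF sg s _ m] in auto)
  also have "\<dots> = n * n + (m-1) * (n + DD n E)"
    unfolding DD_def by (simp add: sum.distrib sum_distrib_left algebra_simps)
  finally show ?thesis .
qed

lemma GG_bound:
  assumes sg: "simple_graph_on n E" and s: "s \<in> bwf_states n m" and t: "t \<in> bwf_states n m" and m: "m > 0"
  shows "GG n m E s \<le> (2*m-1) * bwf_social_cost n E t"
proof -
  have 1: "n^2 \<le> m * AA n t" by (rule A_lower[OF t m])
  have 2: "n + DD n E \<le> AA n t + BB n E t" using D_le[OF sg, of t] by simp
  have 3: "(m-1) * (n + DD n E) \<le> (m-1) * (AA n t + BB n E t)" using 2 by (rule mult_le_mono2)
  have 4: "m * AA n t \<le> m * (AA n t + BB n E t)" by simp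
  have "GG n m E s \<le> m * (AA n t + BB n E t) + (m-1) * (AA n t + BB n E t)"
    unfolding GG_eq[OF sg s m] by (rule add_mono[OF le_trans[OF 1[unfolded power2_eq_square] 4] 3])
  also have "\<dots> = (2*m-1) * (AA n t + BB n E t)"
  proof -
    have "2*m-1 = m + (m-1)" using m by simp
    then show ?thesis by (simp only: add_mult_distrib)
  qed
  finally show ?thesis by (simp add: social_AB)
qed

lemma states_fin: "finite (bwf_states n m)" unfolding bwf_states_def by (simp add: finite_PiE)
lemma states_ne: "m > 0 \<Longrightarrow> bwf_states n m \<noteq> {}" unfolding bwf_states_def by (force simp: PiE_eq_empty_iff)

lemma opt_ex: assumes "m > 0" shows "\<exists>t\<in>bwf_states n m. bwf_opt n m E = bwf_social_cost n E t"
proof -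
  have "bwf_opt n m E \<in> bwf_social_cost n E ` bwf_states n m"
    unfolding bwf_opt_def using states_fin states_ne[OF assms] by (intro Min_in) auto
  then show ?thesis by auto
qed

lemma opt_le: "t \<in> bwf_states n m \<Longrightarrow> bwf_opt n m E \<le> bwf_social_cost n E t"
  unfolding bwf_opt_def using states_fin by (intro Min_le) auto

lemma GG_opt:
  assumes sg: "simple_graph_on n E" and s: "s \<in> bwf_states n m" and m: "m > 0"
  shows "real (GG n m E s) \<le> real m * ((2 - 1 / real m) * real (bwf_opt n m E))"
proof -
  obtain t where t: "t \<in> bwf_states n m" "bwf_opt n m E = bwf_social_cost n E t" using opt_ex[OF m] by blast
  have "GG n m E s \<le> (2*m-1) * bwf_opt n m E" using GG_bound[OF sg s t(1) m] t(2) by simp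
  then have "real (GG n m E s) \<le> real ((2*m-1) * bwf_opt n m E)" by linarith
  also have "\<dots> = real m * ((2 - 1 / real m) * real (bwf_opt n m E))"
    using m by (simp add: of_nat_diff field_simps)
  finally show ?thesis .
qed

lemma part_smooth:
  assumes sg: "simple_graph_on n E" and m: "m > 0"
  shows "bwf_semi_smooth n m E (2 - 1 / real m) 0"
  unfolding bwf_semi_smooth_def
proof (intro exI[of _ "\<lambda>i. pmf_of_set {..<m}"] conjI allI impI ballI)
  fix i assume "i < n" then show "set_pmf (pmf_of_set {..<m}) \<subseteq> {..<m}" using m by (subst set_pmf_of_set) auto
next
  fix s assume s: "s \<in> bwf_states n m"
  have "(\<Sum>i<n. measure_pmf.expectation (pmf_of_set {..<m}) (\<lambda>k. real (bwf_cost n E (s(i := k)) i)))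
      = (\<Sum>i<n. (\<Sum>k<m. real (bwf_cost n E (s(i := k)) i)) / real m)"
    by (rule sum.cong[OF refl]) (subst integral_pmf_of_set; use m in auto)
  also have "\<dots> = real (GG n m E s) / real m"
    unfolding GG_def by (simp add: sum_divide_distrib)
  also have "\<dots> \<le> (2 - 1 / real m) * real (bwf_opt n m E)"
    using GG_opt[OF sg s m] m by (simp add: divide_le_eq mult.commute)
  finally show "(\<Sum>i<n. measure_pmf.expectation (pmf_of_set {..<m}) (\<lambda>k. real (bwf_cost n E (s(i := k)) i)))
      \<le> (2 - 1 / real m) * real (bwf_opt n m E) + 0 * real (bwf_social_cost n E s)" by simp
qed

lemma part_cce:
  assumes sg: "simple_graph_on n E" and m: "m > 0" and cce: "bwf_CCE n m E \<sigma>"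
  shows "measure_pmf.expectation \<sigma> (\<lambda>s. real (bwf_social_cost n E s)) \<le> (2 - 1 / real m) * real (bwf_opt n m E)"
proof -
  define S where "S = bwf_states n m"
  have sup: "set_pmf \<sigma> \<subseteq> S" using cce unfolding bwf_CCE_def S_def by auto
  have fin: "finite S" unfolding S_def by (rule states_fin)
  have int: "measure_pmf.expectation \<sigma> f = (\<Sum>s\<in>S. pmf \<sigma> s * f s)" for f :: "(nat \<Rightarrow> nat) \<Rightarrow> real"
    by (subst integral_measure_pmf[OF fin]) (use sup in auto)
  define Ec where "Ec i = (\<Sum>s\<in>S. pmf \<sigma> s * real (bwf_cost n E s i))" for i
  define Ed where "Ed i k = (\<Sum>s\<in>S. pmf \<sigma> s * real (bwf_cost n E (s(i:=k)) i))" for i k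
  have ce: "Ec i \<le> Ed i k" if "i < n" "k < m" for i k
    using cce that unfolding bwf_CCE_def Ec_def Ed_def int by auto
  have mi: "real m * Ec i \<le> (\<Sum>k<m. Ed i k)" if "i < n" for i
  proof -
    have "(\<Sum>k<m. Ec i) \<le> (\<Sum>k<m. Ed i k)" by (intro sum_mono) (use ce that in auto)
    then show ?thesis by simp
  qed
  have lhs: "measure_pmf.expectation \<sigma> (\<lambda>s. real (bwf_social_cost n E s)) = (\<Sum>i<n. Ec i)"
  proof -
    have "measure_pmf.expectation \<sigma> (\<lambda>s. real (bwf_social_cost n E s)) = (\<Sum>s\<in>S. \<Sum>i<n. pmf \<sigma> s * real (bwf_cost n E s i))"
      by (simp only: int bwf_social_cost_def of_nat_sum sum_distrib_left)
    also have "\<dots> = (\<Sum>i<n. Ec i)" unfolding Ec_def by (rule sum.swap)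
    finally show ?thesis .
  qed
  have rhs: "(\<Sum>i<n. \<Sum>k<m. Ed i k) = (\<Sum>s\<in>S. pmf \<sigma> s * real (GG n m E s))"
  proof -
    have "(\<Sum>i<n. \<Sum>k<m. Ed i k) = (\<Sum>i<n. \<Sum>s\<in>S. \<Sum>k<m. pmf \<sigma> s * real (bwf_cost n E (s(i:=k)) i))"
      unfolding Ed_def by (rule sum.cong[OF refl]) (rule sum.swap)
    also have "\<dots> = (\<Sum>s\<in>S. \<Sum>i<n. \<Sum>k<m. pmf \<sigma> s * real (bwf_cost n E (s(i:=k)) i))"
      by (rule sum.swap)
    also have "\<dots> = (\<Sum>s\<in>S. pmf \<sigma> s * real (GG n m E s))"
      by (simp only: GG_def of_nat_sum sum_distrib_left)
    finally show ?thesis .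
  qed
  have "(\<Sum>s\<in>S. pmf \<sigma> s * real (GG n m E s)) \<le> (\<Sum>s\<in>S. pmf \<sigma> s * (real m * ((2 - 1 / real m) * real (bwf_opt n m E))))"
    by (intro sum_mono mult_left_mono) (use GG_opt[OF sg _ m] in \<open>auto simp: S_def pmf_nonneg\<close>)
  also have "\<dots> = real m * ((2 - 1 / real m) * real (bwf_opt n m E))"
    by (simp add: sum_distrib_right[symmetric] sum_pmf_eq_1[OF fin sup])
  finally have "real m * (\<Sum>i<n. Ec i) \<le> real m * ((2 - 1 / real m) * real (bwf_opt n m E))"
    using rhs sum_mono[of "{..<n}" "\<lambda>i. real m * Ec i" "\<lambda>i. \<Sum>k<m. Ed i k"] mi
    by (simp add: sum_distrib_left)
  then show ?thesis unfolding lhs using m by simp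
qed

lemma div_lt: "i < m^2 \<Longrightarrow> i div (m::nat) < m"
  by (simp add: less_mult_imp_div_less power2_eq_square)

lemma clique_part:
  assumes m: "m > 0" and s: "s \<in> bwf_states (m^2) m"
    and H: "\<forall>c<m. \<forall>k<m. card {i \<in> {..<m^2}. i div m = c \<and> s i = k} = 1"
  shows "bwf_pure_NE (m^2) m (clique_graph m) s \<and>
         real (bwf_social_cost (m^2) (clique_graph m) s) = (2 - 1 / real m) * real (bwf_opt (m^2) m (clique_graph m))"
proof -
  define N where "N = m^2"
  define E where "E = clique_graph m"
  have sm: "s j < m" if "j < N" for j using s that unfolding bwf_states_def PiE_iff N_def by blast
  have dl: "j div m < m" if "j < N" for j using div_lt that unfolding N_def by blast
  define P where "P c k = {i \<in> {..<N}. i div m = c \<and> s i = k}" for c k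
  have P1: "card (P c k) = 1" if "c < m" "k < m" for c k using H that unfolding P_def N_def by blast
  have Pfin: "finite (P c k)" for c k unfolding P_def by simp
  have load: "card {j \<in> {..<N}. s j = k} = m" if k: "k < m" for k
  proof -
    have "{j \<in> {..<N}. s j = k} = (\<Union>c\<in>{..<m}. P c k)" unfolding P_def using dl by auto
    moreover have "card (\<Union>c\<in>{..<m}. P c k) = (\<Sum>c\<in>{..<m}. card (P c k))"
      by (rule card_UN_disjoint) (auto simp: Pfin P_def)
    moreover have "(\<Sum>c\<in>{..<m}. card (P c k)) = m" using P1 k by simp
    ultimately show ?thesis by simp
  qed
  define Q where "Q c = {j \<in> {..<N}. j div m = c}" for c
  have Qfin: "finite (Q c)" for c unfolding Q_def by simp
  have clq: "card (Q c) = m" if c: "c < m" for c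
  proof -
    have "Q c = (\<Union>k\<in>{..<m}. P c k)" unfolding P_def Q_def using sm by auto
    moreover have "card (\<Union>k\<in>{..<m}. P c k) = (\<Sum>k\<in>{..<m}. card (P c k))"
      by (rule card_UN_disjoint) (auto simp: Pfin P_def)
    moreover have "(\<Sum>k\<in>{..<m}. card (P c k)) = m" using P1 c by simp
    ultimately show ?thesis by simp
  qed
  have uniq: "j = j'" if "j < N" "j' < N" "j div m = j' div m" "s j = s j'" for j j'
  proof -
    have "card (P (j div m) (s j)) = 1" using P1 dl sm that by blast
    then obtain a where "P (j div m) (s j) = {a}" by (rule card_1_singletonE)
    moreover have "j \<in> P (j div m) (s j)" "j' \<in> P (j div m) (s j)" using that unfolding P_def by auto
    ultimately show ?thesis by (metis singletonD)
  qed
  have Qm: "j \<in> Q c \<longleftrightarrow> j < N \<and> j div m = c" for j c unfolding Q_def by simp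
  have Pm: "j \<in> P c k \<longleftrightarrow> j < N \<and> j div m = c \<and> s j = k" for j c k unfolding P_def by simp
  have Eiff: "E i j \<longleftrightarrow> j \<in> Q (i div m) \<and> j \<noteq> i" if "i < N" for i j
    using that unfolding E_def clique_graph_def Q_def N_def by auto
  have cost: "bwf_cost N E s i = 2*m - 1" if i: "i < N" for i
  proof -
    have "{j \<in> {..<N}. E i j \<and> s j \<noteq> s i} = Q (i div m) - {i}"
    proof (rule equalityI; rule subsetI)
      fix j assume "j \<in> {j \<in> {..<N}. E i j \<and> s j \<noteq> s i}"
      then show "j \<in> Q (i div m) - {i}" using Eiff[OF i, of j] by blast
    next
      fix j assume j: "j \<in> Q (i div m) - {i}"
      then have "j < N" "j div m = i div m" "j \<noteq> i" using Qm by auto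
      then have "s j \<noteq> s i" using uniq[of j i] i by blast
      moreover have "E i j" using Eiff[OF i, of j] j by blast
      ultimately show "j \<in> {j \<in> {..<N}. E i j \<and> s j \<noteq> s i}" using \<open>j < N\<close> by blast
    qed
    moreover have "i \<in> Q (i div m)" using Qm i by blast
    ultimately have "card {j \<in> {..<N}. E i j \<and> s j \<noteq> s i} = card (Q (i div m)) - 1"
      by (simp only: card_Diff_singleton)
    then have "card {j \<in> {..<N}. E i j \<and> s j \<noteq> s i} = m - 1"
      using clq[OF dl[OF i]] by simp
    moreover have "card {j \<in> {..<N}. s j = s i} = m" using load sm i by blast
    ultimately show ?thesis unfolding bwf_cost_def bwf_load_def using m by simp
  qed
  have dev: "2*m - 1 \<le> bwf_cost N E (s(i:=k)) i" if i: "i < N" and k: "k < m" for i k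
  proof (cases "k = s i")
    case True
    then have "s(i:=k) = s" by simp
    then show ?thesis using cost[OF i] by simp
  next
    case False
    have "insert i {j \<in> {..<N}. s j = k} \<subseteq> {j \<in> {..<N}. (s(i:=k)) j = k}" using i by auto
    then have "card (insert i {j \<in> {..<N}. s j = k}) \<le> card {j \<in> {..<N}. (s(i:=k)) j = k}"
      by (intro card_mono) auto
    moreover have "card (insert i {j \<in> {..<N}. s j = k}) = m + 1" using load[OF k] False by simp
    ultimately have l: "m + 1 \<le> bwf_load N (s(i:=k)) k" unfolding bwf_load_def by simp
    define R where "R = {j \<in> {..<N}. E i j \<and> (s(i:=k)) j \<noteq> k}"
    have Rm: "j \<in> R \<longleftrightarrow> j < N \<and> E i j \<and> (s(i:=k)) j \<noteq> k" for j unfolding R_def by simp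
    have "Q (i div m) \<subseteq> {i} \<union> P (i div m) k \<union> R"
    proof
      fix j assume j: "j \<in> Q (i div m)"
      show "j \<in> {i} \<union> P (i div m) k \<union> R"
      proof (cases "j = i")
        case True then show ?thesis by blast
      next
        case ne: False
        then have Eij: "E i j" using Eiff[OF i, of j] j by blast
        show ?thesis
        proof (cases "s j = k")
          case True then have "j \<in> P (i div m) k" using Pm Qm j by blast
          then show ?thesis by blast
        next
          case False then have "j \<in> R" using Rm Qm j ne Eij by auto
          then show ?thesis by blast
        qed
      qed
    qed
    moreover have "finite ({i} \<union> P (i div m) k \<union> R)" using Pfin unfolding R_def by simp
    ultimately have "card (Q (i div m)) \<le> card ({i} \<union> P (i div m) k \<union> R)"
      by (rule card_mono[rotated])
    also have "\<dots> \<le> card ({i} \<union> P (i div m) k) + card R" by (rule card_Un_le)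
    also have "\<dots> \<le> card {i} + card (P (i div m) k) + card R" using card_Un_le[of "{i}" "P (i div m) k"] by simp
    finally have "m \<le> 2 + card R" using clq[OF dl[OF i]] P1[OF dl[OF i] k] by simp
    then show ?thesis using l unfolding bwf_cost_def R_def by simp
  qed
  define t where "t = (\<lambda>i. if i < N then i div m else undefined)"
  have t: "t \<in> bwf_states N m" unfolding bwf_states_def t_def using dl by (auto simp: PiE_iff extensional_def)
  have tcost: "bwf_cost N E t i = m" if i: "i < N" for i
  proof -
    have "{j \<in> {..<N}. E i j \<and> t j \<noteq> t i} = {}" using Eiff[OF i] i unfolding t_def Q_def by auto
    moreover have "{j \<in> {..<N}. t j = t i} = Q (i div m)" using i unfolding t_def Q_def by auto
    ultimately show ?thesis unfolding bwf_cost_def bwf_load_def using clq[OF dl[OF i]] by simp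
  qed
  have ct: "bwf_social_cost N E t = N * m" unfolding bwf_social_cost_def using tcost by simp
  have opt_up: "bwf_opt N m E \<le> N * m" using opt_le[OF t, of E] ct by simp
  obtain u where u: "u \<in> bwf_states N m" "bwf_opt N m E = bwf_social_cost N E u" using opt_ex[OF m] by blast
  have "N^2 \<le> m * AA N u" by (rule A_lower[OF u(1) m])
  also have "\<dots> \<le> m * bwf_opt N m E" unfolding u(2) social_AB by simp
  finally have "m * (N * m) \<le> m * bwf_opt N m E" unfolding N_def by (simp add: power2_eq_square mult.assoc)
  then have "N * m \<le> bwf_opt N m E" using m by simp
  then have opt: "bwf_opt N m E = N * m" using opt_up by simp
  have sc: "bwf_social_cost N E s = N * (2*m - 1)" unfolding bwf_social_cost_def using cost by simp
  have NE: "bwf_pure_NE N m E s"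
    unfolding bwf_pure_NE_def using s cost dev N_def by auto
  have "real (bwf_social_cost N E s) = (2 - 1 / real m) * real (bwf_opt N m E)"
    unfolding sc opt using m by (simp add: of_nat_diff field_simps)
  then show ?thesis using NE unfolding N_def E_def by simp
qed

theorem theorem10:
  shows "(\<forall>n m E. m \<ge> 1 \<longrightarrow> simple_graph_on n E \<longrightarrow>
            bwf_semi_smooth n m E (2 - 1 / real m) 0 \<and>
            (\<forall>\<sigma>. bwf_CCE n m E \<sigma> \<longrightarrow>
               measure_pmf.expectation \<sigma> (\<lambda>s. real (bwf_social_cost n E s))
                 \<le> (2 - 1 / real m) * real (bwf_opt n m E)))
       \<and>
         (\<forall>m. m \<ge> 1 \<longrightarrow>
            (\<forall>s \<in> bwf_states (m^2) m.
               (\<forall>c<m. \<forall>k<m. card {i \<in> {..<m^2}. i div m = c \<and> s i = k} = 1) \<longrightarrow>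
               bwf_pure_NE (m^2) m (clique_graph m) s \<and>
               real (bwf_social_cost (m^2) (clique_graph m) s)
                 = (2 - 1 / real m) * real (bwf_opt (m^2) m (clique_graph m))))"
proof (intro conjI allI impI ballI)
  fix n m E assume "1 \<le> (m::nat)" "simple_graph_on n E"
  then show "bwf_semi_smooth n m E (2 - 1 / real m) 0" using part_smooth by simp
next
  fix n m E \<sigma> assume "1 \<le> (m::nat)" "simple_graph_on n E" "bwf_CCE n m E \<sigma>"
  then show "measure_pmf.expectation \<sigma> (\<lambda>s. real (bwf_social_cost n E s)) \<le> (2 - 1 / real m) * real (bwf_opt n m E)"
    using part_cce by simp
next
  fix m s assume "1 \<le> (m::nat)" "s \<in> bwf_states (m^2) m"
    "\<forall>c<m. \<forall>k<m. card {i \<in> {..<m^2}. i div m = c \<and> s i = k} = 1"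
  then show "bwf_pure_NE (m^2) m (clique_graph m) s" using clique_part[of m s] by simp
next
  fix m s assume "1 \<le> (m::nat)" "s \<in> bwf_states (m^2) m"
    "\<forall>c<m. \<forall>k<m. card {i \<in> {..<m^2}. i div m = c \<and> s i = k} = 1"
  then show "real (bwf_social_cost (m^2) (clique_graph m) s) = (2 - 1 / real m) * real (bwf_opt (m^2) m (clique_graph m))"
    using clique_part[of m s] by simp
qed

end
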